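(* Let $G$ be a finite group and let $\mathsf{T}$ be a $G$-transfer system. Then any two minimal generating sets of $\mathsf{T}$ have the same cardinality. Consequently there is a well-defined map $\mathfrak{m}$ from the set of $G$-transfer systems to $\mathbb{N}$ sending a transfer system $\mathsf{T}$ to the cardinality of a minimal generating set of $\mathsf{T}$.
   Context: For a finite group $G$, an arrow is a pair $(H,K)$ of subgroups of $G$ with $H \leqslant K$; it is an identity arrow if $H=K$. A $G$-transfer system is a set $\mathsf{T}$ of arrows which contains all identity arrows and is closed under: composition (if $(H,K),(K,L)\in\mathsf{T}$ then $(H,L)\in\mathsf{T}$); conjugation (if $(H,K)\in\mathsf{T}$ then $(gHg^{-1},gKg^{-1})\in\mathsf{T}$ for all $g\in G$); restriction (if $(H,K)\in\mathsf{T}$ and $L\leqslant K$ then $(H\cap L,L)\in\mathsf{T}$). For a set $S$ of non-identity arrows, $\langle S\rangle$ denotes the smallest $G$-transfer system containing $S$. A minimal generating set for a transfer system $\mathsf{T}$ is a set $S\subseteq\mathsf{T}$ of non-identity arrows with $\langle S\rangle=\mathsf{T}$ and $\langle S\setminus\{s\}\rangle\subsetneq\mathsf{T}$ for every $s\in S$. *)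

theory Defs
  imports "HOL-Algebra.Group"
begin

definition conj_sub :: "('a, 'b) monoid_scheme \<Rightarrow> 'a \<Rightarrow> 'a set \<Rightarrow> 'a set" where
  "conj_sub G g H = {g \<otimes>\<^bsub>G\<^esub> h \<otimes>\<^bsub>G\<^esub> inv\<^bsub>G\<^esub> g | h. h \<in> H}"

definition arrows :: "('a, 'b) monoid_scheme \<Rightarrow> ('a set \<times> 'a set) set" where
  "arrows G = {(H, K). subgroup H G \<and> subgroup K G \<and> H \<subseteq> K}"

definition transfer_system :: "('a, 'b) monoid_scheme \<Rightarrow> ('a set \<times> 'a set) set \<Rightarrow> bool" where
  "transfer_system G T \<longleftrightarrow>
     T \<subseteq> arrows G
   \<and> (\<forall>H. subgroup H G \<longrightarrow> (H, H) \<in> T)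
   \<and> (\<forall>H K L. (H, K) \<in> T \<longrightarrow> (K, L) \<in> T \<longrightarrow> (H, L) \<in> T)
   \<and> (\<forall>H K g. (H, K) \<in> T \<longrightarrow> g \<in> carrier G \<longrightarrow> (conj_sub G g H, conj_sub G g K) \<in> T)
   \<and> (\<forall>H K L. (H, K) \<in> T \<longrightarrow> subgroup L G \<longrightarrow> L \<subseteq> K \<longrightarrow> (H \<inter> L, L) \<in> T)"

definition generated_ts :: "('a, 'b) monoid_scheme \<Rightarrow> ('a set \<times> 'a set) set \<Rightarrow> ('a set \<times> 'a set) set" where
  "generated_ts G S = \<Inter> {T. transfer_system G T \<and> S \<subseteq> T}"

definition minimal_generating_set ::
  "('a, 'b) monoid_scheme \<Rightarrow> ('a set \<times> 'a set) set \<Rightarrow> ('a set \<times> 'a set) set \<Rightarrow> bool" where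
  "minimal_generating_set G T S \<longleftrightarrow>
     S \<subseteq> T
   \<and> (\<forall>(H, K) \<in> S. H \<noteq> K)
   \<and> generated_ts G S = T
   \<and> (\<forall>s \<in> S. generated_ts G (S - {s}) \<subset> T)"

end

theory Submission
  imports Defs
begin

context group
begin

lemma cs_carrier: "A \<subseteq> carrier G \<Longrightarrow> g \<in> carrier G \<Longrightarrow> conj_sub G g A \<subseteq> carrier G"
  unfolding conj_sub_def by auto

lemma cs_mono: "A \<subseteq> B \<Longrightarrow> conj_sub G g A \<subseteq> conj_sub G g B"
  unfolding conj_sub_def by auto

lemma cs_comp: assumes "A \<subseteq> carrier G" "g \<in> carrier G" "h \<in> carrier G"
  shows "conj_sub G h (conj_sub G g A) = conj_sub G (h \<otimes> g) A"
proof -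
  have e: "h \<otimes> (g \<otimes> a \<otimes> inv g) \<otimes> inv h = (h \<otimes> g) \<otimes> a \<otimes> inv (h \<otimes> g)" if "a \<in> carrier G" for a
    using assms that by (simp add: inv_mult_group m_assoc)
  show ?thesis
  proof
    show "conj_sub G h (conj_sub G g A) \<subseteq> conj_sub G (h \<otimes> g) A"
    proof
      fix x assume "x \<in> conj_sub G h (conj_sub G g A)"
      then obtain a where a: "a \<in> A" "x = h \<otimes> (g \<otimes> a \<otimes> inv g) \<otimes> inv h"
        unfolding conj_sub_def by auto
      then have "x = (h \<otimes> g) \<otimes> a \<otimes> inv (h \<otimes> g)" using e assms by auto
      then show "x \<in> conj_sub G (h \<otimes> g) A" using a unfolding conj_sub_def by auto
    qed
    show "conj_sub G (h \<otimes> g) A \<subseteq> conj_sub G h (conj_sub G g A)"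
    proof
      fix x assume "x \<in> conj_sub G (h \<otimes> g) A"
      then obtain a where a: "a \<in> A" "x = (h \<otimes> g) \<otimes> a \<otimes> inv (h \<otimes> g)"
        unfolding conj_sub_def by auto
      then have "x = h \<otimes> (g \<otimes> a \<otimes> inv g) \<otimes> inv h" using e assms by auto
      moreover have "g \<otimes> a \<otimes> inv g \<in> conj_sub G g A" using a unfolding conj_sub_def by auto
      ultimately show "x \<in> conj_sub G h (conj_sub G g A)" unfolding conj_sub_def by auto
    qed
  qed
qed

lemma cs_one: assumes "A \<subseteq> carrier G" shows "conj_sub G \<one> A = A"
proof -
  have "x = \<one> \<otimes> x \<otimes> inv \<one>" if "x \<in> A" for x using assms that by auto
  then show ?thesis unfolding conj_sub_def using assms by auto
qed

lemma cs_inv: assumes "A \<subseteq> carrier G" "g \<in> carrier G"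
  shows "conj_sub G (inv g) (conj_sub G g A) = A"
  using assms by (simp add: cs_comp cs_one)

lemma cs_inv2: assumes "A \<subseteq> carrier G" "g \<in> carrier G"
  shows "conj_sub G g (conj_sub G (inv g) A) = A"
  using cs_inv[of A "inv g"] assms by simp

lemma cs_Int: assumes "A \<subseteq> carrier G" "B \<subseteq> carrier G" "g \<in> carrier G"
  shows "conj_sub G g (A \<inter> B) = conj_sub G g A \<inter> conj_sub G g B"
proof
  show "conj_sub G g (A \<inter> B) \<subseteq> conj_sub G g A \<inter> conj_sub G g B"
    by (simp add: cs_mono)
  show "conj_sub G g A \<inter> conj_sub G g B \<subseteq> conj_sub G g (A \<inter> B)"
  proof
    fix x assume "x \<in> conj_sub G g A \<inter> conj_sub G g B"
    then obtain a b where ab: "a \<in> A" "b \<in> B" "x = g \<otimes> a \<otimes> inv g" "x = g \<otimes> b \<otimes> inv g"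
      unfolding conj_sub_def by auto
    then have "a = b" using assms
      by (metis inv_closed m_closed right_cancel Units_l_cancel Units_eq subsetD)
    then show "x \<in> conj_sub G g (A \<inter> B)" using ab unfolding conj_sub_def by auto
  qed
qed

lemma cs_card: assumes "A \<subseteq> carrier G" "g \<in> carrier G"
  shows "card (conj_sub G g A) = card A"
proof -
  have "conj_sub G g A = (\<lambda>a. g \<otimes> a \<otimes> inv g) ` A" unfolding conj_sub_def by auto
  moreover have "inj_on (\<lambda>a. g \<otimes> a \<otimes> inv g) A"
    unfolding inj_on_def using assms
    by (metis inv_closed m_closed right_cancel Units_l_cancel Units_eq subsetD)
  ultimately show ?thesis by (simp add: card_image)
qed

end

definition leR :: "('a, 'b) monoid_scheme \<Rightarrow> ('a set \<times> 'a set) \<Rightarrow> ('a set \<times> 'a set) \<Rightarrow> bool" where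
  "leR G a b \<longleftrightarrow> (\<exists>g\<in>carrier G. \<exists>L. subgroup L G \<and> L \<subseteq> conj_sub G g (snd b)
      \<and> a = (conj_sub G g (fst b) \<inter> L, L))"

definition Jset :: "('a set \<times> 'a set) set \<Rightarrow> ('a set \<times> 'a set) set" where
  "Jset T = {(A, B). (A, B) \<in> T \<and> A \<noteq> B \<and> (\<forall>Y. (A, Y) \<in> T \<longrightarrow> (Y, B) \<in> T \<longrightarrow> Y = A \<or> Y = B)}"

definition Jmax :: "('a, 'b) monoid_scheme \<Rightarrow> ('a set \<times> 'a set) set \<Rightarrow> ('a set \<times> 'a set) set" where
  "Jmax G T = {j \<in> Jset T. \<forall>j'\<in>Jset T. leR G j j' \<longrightarrow> leR G j' j}"

definition cj :: "('a, 'b) monoid_scheme \<Rightarrow> 'a \<Rightarrow> ('a set \<times> 'a set) \<Rightarrow> ('a set \<times> 'a set)" where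
  "cj G g b = (conj_sub G g (fst b), conj_sub G g (snd b))"

context group
begin

lemma arrowsD: "(A, B) \<in> arrows G \<Longrightarrow> subgroup A G \<and> subgroup B G \<and> A \<subseteq> B"
  unfolding arrows_def by auto

lemma arrows_carrier: "(A, B) \<in> arrows G \<Longrightarrow> A \<subseteq> carrier G \<and> B \<subseteq> carrier G"
  unfolding arrows_def using subgroup.subset by auto

lemma leR_refl: assumes "b \<in> arrows G" shows "leR G b b"
proof -
  obtain A B where b: "b = (A, B)" by force
  have "A \<subseteq> B" "A \<subseteq> carrier G" "B \<subseteq> carrier G" "subgroup B G"
    using assms arrowsD arrows_carrier b by auto
  then show ?thesis unfolding leR_def b
    by (intro bexI[of _ \<one>] exI[of _ B]) (auto simp: cs_one)
qed

lemma leR_restr: assumes "(A, B) \<in> arrows G" "subgroup L G" "L \<subseteq> B"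
  shows "leR G (A \<inter> L, L) (A, B)"
proof -
  have "A \<subseteq> carrier G" "B \<subseteq> carrier G" using assms arrows_carrier by auto
  then show ?thesis unfolding leR_def using assms
    by (intro bexI[of _ \<one>] exI[of _ L]) (auto simp: cs_one)
qed

lemma leR_trans: assumes ab: "leR G a b" and bc: "leR G b c" and c: "c \<in> arrows G"
  shows "leR G a c"
proof -
  obtain Hc Kc where c': "c = (Hc, Kc)" by force
  have Hc: "Hc \<subseteq> carrier G" and Kc: "Kc \<subseteq> carrier G" using c c' arrows_carrier by auto
  obtain g L where g: "g \<in> carrier G" and L: "subgroup L G" "L \<subseteq> conj_sub G g Kc"
    and b: "b = (conj_sub G g Hc \<inter> L, L)" using bc unfolding leR_def c' by auto
  obtain h M where h: "h \<in> carrier G" and M: "subgroup M G" "M \<subseteq> conj_sub G h L"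
    and a: "a = (conj_sub G h (conj_sub G g Hc \<inter> L) \<inter> M, M)" using ab unfolding leR_def b by auto
  have Lc: "L \<subseteq> carrier G" using L subgroup.subset by blast
  have e1: "conj_sub G h (conj_sub G g Hc \<inter> L) = conj_sub G (h \<otimes> g) Hc \<inter> conj_sub G h L"
    using cs_Int[of "conj_sub G g Hc" L h] cs_carrier[OF Hc g] Lc h cs_comp[OF Hc g h] by simp
  have "M \<subseteq> conj_sub G (h \<otimes> g) Kc"
    using M(2) cs_mono[OF L(2), of h] cs_comp[OF Kc g h] by auto
  moreover have "a = (conj_sub G (h \<otimes> g) Hc \<inter> M, M)" using a e1 M(2) by auto
  ultimately show ?thesis unfolding leR_def c' using g h M(1) by auto
qed

lemma ts_arrows: "transfer_system G D \<Longrightarrow> D \<subseteq> arrows G"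
  unfolding transfer_system_def by auto

lemma ts_id: "transfer_system G D \<Longrightarrow> subgroup H G \<Longrightarrow> (H, H) \<in> D"
  unfolding transfer_system_def by auto

lemma ts_comp: "transfer_system G D \<Longrightarrow> (H, K) \<in> D \<Longrightarrow> (K, L) \<in> D \<Longrightarrow> (H, L) \<in> D"
  unfolding transfer_system_def by blast

lemma ts_conj: "transfer_system G D \<Longrightarrow> (H, K) \<in> D \<Longrightarrow> g \<in> carrier G \<Longrightarrow>
   (conj_sub G g H, conj_sub G g K) \<in> D"
  unfolding transfer_system_def by blast

lemma ts_cj: "transfer_system G D \<Longrightarrow> b \<in> D \<Longrightarrow> g \<in> carrier G \<Longrightarrow> cj G g b \<in> D"
  unfolding cj_def using ts_conj[of D "fst b" "snd b" g] by simp

lemma ts_res: "transfer_system G D \<Longrightarrow> (H, K) \<in> D \<Longrightarrow> subgroup L G \<Longrightarrow> L \<subseteq> K \<Longrightarrow> (H \<inter> L, L) \<in> D"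
  unfolding transfer_system_def by blast

lemma leR_closed: assumes D: "transfer_system G D" and b: "b \<in> D" and ab: "leR G a b"
  shows "a \<in> D"
proof -
  obtain g L where g: "g \<in> carrier G" and L: "subgroup L G" "L \<subseteq> conj_sub G g (snd b)"
    and a: "a = (conj_sub G g (fst b) \<inter> L, L)" using ab unfolding leR_def by auto
  have "(conj_sub G g (fst b), conj_sub G g (snd b)) \<in> D" using ts_conj[OF D _ g, of "fst b" "snd b"] b by simp
  then show ?thesis using ts_res[OF D _ L] a by simp
qed

lemma leR_conj1: assumes D: "transfer_system G D" and b: "b \<in> D" and g: "g \<in> carrier G"
  shows "leR G (cj G g b) b"
proof -
  have cb: "cj G g b \<in> arrows G" using ts_cj[OF D b g] ts_arrows[OF D] by auto
  then have "subgroup (conj_sub G g (snd b)) G" "conj_sub G g (fst b) \<subseteq> conj_sub G g (snd b)"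
    using arrowsD[of "conj_sub G g (fst b)" "conj_sub G g (snd b)"] unfolding cj_def by auto
  then show ?thesis unfolding leR_def cj_def using g
    by (intro bexI[of _ g] exI[of _ "conj_sub G g (snd b)"]) auto
qed

lemma leR_conj2: assumes D: "transfer_system G D" and b: "b \<in> D" and g: "g \<in> carrier G"
  shows "leR G b (cj G g b)"
proof -
  have b': "b \<in> arrows G" using b ts_arrows[OF D] by auto
  obtain A B where AB: "b = (A, B)" by force
  have c: "A \<subseteq> carrier G" "B \<subseteq> carrier G" using b' AB arrows_carrier by auto
  have "cj G (inv g) (cj G g b) = b" unfolding cj_def AB using cs_inv c g by simp
  then show ?thesis using leR_conj1[OF D ts_cj[OF D b g], of "inv g"] g by simp
qed

end

locale tsctx = group G for G (structure) + fixes T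
  assumes fin: "finite (carrier G)" and ts: "transfer_system G T"
begin

lemma T_arr: "T \<subseteq> arrows G" using ts_arrows[OF ts] .

lemma TD: "(A, B) \<in> T \<Longrightarrow> subgroup A G \<and> subgroup B G \<and> A \<subseteq> B \<and> A \<subseteq> carrier G \<and> B \<subseteq> carrier G"
  using T_arr arrowsD arrows_carrier by blast

lemma finT: "finite T"
proof -
  have "T \<subseteq> Pow (carrier G) \<times> Pow (carrier G)" using TD by auto
  then show ?thesis using fin finite_subset by blast
qed

lemma sub_fin: "A \<subseteq> carrier G \<Longrightarrow> finite A" using fin finite_subset by blast

lemma leR_card: assumes "leR G a b" "b \<in> arrows G" shows "card (snd a) \<le> card (snd b)"
proof -
  obtain g L where g: "g \<in> carrier G" and L: "subgroup L G" "L \<subseteq> conj_sub G g (snd b)"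
    and a: "a = (conj_sub G g (fst b) \<inter> L, L)" using assms unfolding leR_def by auto
  have sb: "snd b \<subseteq> carrier G" using assms(2) arrows_carrier[of "fst b" "snd b"] by simp
  have "card L \<le> card (conj_sub G g (snd b))"
    using L(2) sub_fin[OF cs_carrier[OF sb g]] by (simp add: card_mono)
  then show ?thesis using a cs_card[OF sb g] by simp
qed

lemma leR_card_eq: assumes ab: "leR G a b" and b: "b \<in> T" and c: "card (snd b) \<le> card (snd a)"
  shows "leR G b a"
proof -
  obtain g L where g: "g \<in> carrier G" and L: "subgroup L G" "L \<subseteq> conj_sub G g (snd b)"
    and a: "a = (conj_sub G g (fst b) \<inter> L, L)" using ab unfolding leR_def by auto
  obtain A B where AB: "b = (A, B)" by force
  have Ac: "A \<subseteq> carrier G" "B \<subseteq> carrier G" "A \<subseteq> B" using TD b AB by auto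
  have "card (conj_sub G g B) \<le> card L" using c a cs_card[OF Ac(2) g] AB by simp
  then have "L = conj_sub G g B" using L(2) AB sub_fin[OF cs_carrier[OF Ac(2) g]]
    by (simp add: card_seteq)
  then have "a = cj G g b" using a AB cs_mono[OF Ac(3)] unfolding cj_def by auto
  then show ?thesis using leR_conj2[OF ts b g] by simp
qed

abbreviation "J \<equiv> Jset T"
abbreviation "JM \<equiv> Jmax G T"

lemma J_T: "j \<in> J \<Longrightarrow> j \<in> T" unfolding Jset_def by auto

lemma JD: "(A, B) \<in> J \<Longrightarrow> (A, B) \<in> T \<and> A \<noteq> B \<and> (\<forall>Y. (A, Y) \<in> T \<longrightarrow> (Y, B) \<in> T \<longrightarrow> Y = A \<or> Y = B)"
  unfolding Jset_def by auto

lemma J_conj: assumes j: "j \<in> J" and h: "h \<in> carrier G" shows "cj G h j \<in> J"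
proof -
  obtain A B where AB: "j = (A, B)" by force
  have jT: "(A, B) \<in> T" and ne: "A \<noteq> B" and ind: "\<And>Y. (A, Y) \<in> T \<Longrightarrow> (Y, B) \<in> T \<Longrightarrow> Y = A \<or> Y = B"
    using JD j AB by auto
  have c: "A \<subseteq> carrier G" "B \<subseteq> carrier G" using TD jT by auto
  let ?c = "conj_sub G h" and ?d = "conj_sub G (inv h)"
  have T1: "(?c A, ?c B) \<in> T" using ts_conj[OF ts jT h] .
  have ne2: "?c A \<noteq> ?c B" using ne cs_inv[OF c(1) h] cs_inv[OF c(2) h] by metis
  have "Y = ?c A \<or> Y = ?c B" if Y1: "(?c A, Y) \<in> T" and Y2: "(Y, ?c B) \<in> T" for Y
  proof -
    have Yc: "Y \<subseteq> carrier G" using TD Y2 by auto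
    have "(A, ?d Y) \<in> T" using ts_conj[OF ts Y1 inv_closed[OF h]] cs_inv[OF c(1) h] by simp
    moreover have "(?d Y, B) \<in> T" using ts_conj[OF ts Y2 inv_closed[OF h]] cs_inv[OF c(2) h] by simp
    ultimately have "?d Y = A \<or> ?d Y = B" using ind by blast
    then show ?thesis using cs_inv2[OF Yc h] by metis
  qed
  then show ?thesis using T1 ne2 unfolding Jset_def cj_def AB by auto
qed

lemma JM_conj: assumes j: "j \<in> JM" and h: "h \<in> carrier G" shows "cj G h j \<in> JM"
proof -
  have jJ: "j \<in> J" and mx: "\<And>j'. j' \<in> J \<Longrightarrow> leR G j j' \<Longrightarrow> leR G j' j" using j unfolding Jmax_def by auto
  have jT: "j \<in> T" using J_T jJ .
  have cT: "cj G h j \<in> T" using ts_cj[OF ts jT h] .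
  have "leR G j' (cj G h j)" if j': "j' \<in> J" "leR G (cj G h j) j'" for j'
  proof -
    have "leR G j j'" using leR_trans[OF leR_conj2[OF ts jT h] j'(2)] J_T[OF j'(1)] T_arr by auto
    then have "leR G j' j" using mx j' by auto
    then show ?thesis using leR_trans[OF _ leR_conj2[OF ts jT h], of j'] cT T_arr by auto
  qed
  then show ?thesis using J_conj[OF jJ h] unfolding Jmax_def by auto
qed

lemma max_exists: assumes j: "j \<in> J" shows "\<exists>m\<in>JM. leR G j m"
proof -
  let ?P = "\<lambda>x. x \<in> J \<and> leR G j x"
  have P0: "?P j" using j leR_refl[of j] J_T[OF j] T_arr by auto
  have bd: "\<forall>y. ?P y \<longrightarrow> card (snd y) < Suc (card (carrier G))"
  proof (intro allI impI)
    fix y assume "?P y"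
    then have "snd y \<subseteq> carrier G" using J_T TD[of "fst y" "snd y"] by auto
    then show "card (snd y) < Suc (card (carrier G))" using card_mono[OF fin] by (simp add: le_imp_less_Suc)
  qed
  obtain m where m: "?P m" and mm: "\<forall>y. ?P y \<longrightarrow> card (snd y) \<le> card (snd m)"
    using Lattices_Big.ex_has_greatest_nat[of ?P j "\<lambda>x. card (snd x)", OF P0 bd] by blast
  have "leR G j' m" if j': "j' \<in> J" "leR G m j'" for j'
  proof -
    have jj': "leR G j j'" using leR_trans[of j m j'] m j' J_T[OF j'(1)] T_arr by auto
    have "card (snd j') \<le> card (snd m)" using mm[rule_format, of j'] j' jj' by blast
    then show ?thesis using leR_card_eq[OF j'(2) J_T[OF j'(1)]] by simp
  qed
  then have "m \<in> JM" using m unfolding Jmax_def by blast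
  then show ?thesis using m by blast
qed


lemma JM_J: "j \<in> JM \<Longrightarrow> j \<in> J" unfolding Jmax_def by auto
lemma JM_T: "j \<in> JM \<Longrightarrow> j \<in> T" using JM_J J_T by blast

lemma Q0: assumes HK: "(H, K) \<in> J" and L: "subgroup L G" "L \<subseteq> K" and jm: "(H \<inter> L, L) \<in> JM"
  shows "L = K"
proof -
  have HKT: "(H, K) \<in> T" using J_T HK .
  have le: "leR G (H \<inter> L, L) (H, K)" using leR_restr[OF _ L] HKT T_arr by auto
  have "leR G (H, K) (H \<inter> L, L)" using jm HK le unfolding Jmax_def by blast
  then have "card K \<le> card L" using leR_card[of "(H, K)" "(H \<inter> L, L)"] JM_T[OF jm] T_arr by auto
  moreover have "finite K" using TD[OF HKT] sub_fin by blast
  ultimately show ?thesis using L(2) card_seteq by blast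
qed

lemma Q1: assumes "(H, K) \<in> T" "subgroup L G" "L \<subseteq> K" "(H \<inter> L, L) \<in> JM"
  shows "H \<subseteq> L"
  using assms
proof (induction "card K - card H" arbitrary: H K rule: less_induct)
  case less
  have HK: "(H, K) \<in> T" and L: "subgroup L G" "L \<subseteq> K" and jm: "(H \<inter> L, L) \<in> JM" using less.prems by auto
  have HKs: "H \<subseteq> K" using TD[OF HK] by auto
  show ?case
  proof (cases "(H, K) \<in> J")
    case True
    then show ?thesis using Q0[OF True L jm] HKs by simp
  next
    case False
    have jJ: "(H \<inter> L, L) \<in> J" using JM_J[OF jm] .
    have ind: "\<And>Z. (H \<inter> L, Z) \<in> T \<Longrightarrow> (Z, L) \<in> T \<Longrightarrow> Z = H \<inter> L \<or> Z = L"
      using JD[OF jJ] by blast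
    have "H \<noteq> K"
    proof
      assume "H = K"
      then have "H \<inter> L = L" using L by auto
      then show False using JD[OF jJ] by simp
    qed
    then obtain Y where Y1: "(H, Y) \<in> T" and Y2: "(Y, K) \<in> T" and YH: "Y \<noteq> H" and YK: "Y \<noteq> K"
      using False HK unfolding Jset_def by auto
    have HY: "H \<subseteq> Y" and YKs: "Y \<subseteq> K" and sY: "subgroup Y G" using TD[OF Y1] TD[OF Y2] by auto
    have fK: "finite K" and fY: "finite Y" using TD[OF Y2] sub_fin by auto
    have cHY: "card H < card Y" using HY YH fY psubset_card_mono by blast
    have cYK: "card Y < card K" using YKs YK fK psubset_card_mono by blast
    have sYL: "subgroup (Y \<inter> L) G" using subgroups_Inter_pair[OF sY L(1)] .
    have "(H \<inter> (Y \<inter> L), Y \<inter> L) \<in> T" using ts_res[OF ts Y1 sYL] by auto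
    moreover have "H \<inter> (Y \<inter> L) = H \<inter> L" using HY by auto
    ultimately have r1: "(H \<inter> L, Y \<inter> L) \<in> T" by simp
    have r2: "(Y \<inter> L, L) \<in> T" using ts_res[OF ts Y2 L] .
    have "Y \<inter> L = H \<inter> L \<or> Y \<inter> L = L" using ind[OF r1 r2] .
    then show ?thesis
    proof
      assume e: "Y \<inter> L = L"
      then have "L \<subseteq> Y" by auto
      then show ?thesis using less.hyps[of Y H] cHY cYK Y1 L jm by auto
    next
      assume e: "Y \<inter> L = H \<inter> L"
      then have "(Y \<inter> L, L) \<in> JM" using jm by simp
      then have "Y \<subseteq> L" using less.hyps[of K Y] cHY cYK Y2 L by auto
      then have "Y \<subseteq> H" using e by auto
      then show ?thesis using HY YH by auto
    qed
  qed
qed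

lemma Q2: assumes "(H, K) \<in> T" "subgroup L1 G" "L1 \<subseteq> K" "(H \<inter> L1, L1) \<in> JM"
   "subgroup L2 G" "L2 \<subseteq> K" "(H \<inter> L2, L2) \<in> JM"
  shows "L1 = L2"
  using assms
proof (induction "card K - card H" arbitrary: H K rule: less_induct)
  case less
  have HK: "(H, K) \<in> T" and L1: "subgroup L1 G" "L1 \<subseteq> K" and jm1: "(H \<inter> L1, L1) \<in> JM"
    and L2: "subgroup L2 G" "L2 \<subseteq> K" and jm2: "(H \<inter> L2, L2) \<in> JM" using less.prems by auto
  show ?case
  proof (cases "(H, K) \<in> J")
    case True
    then show ?thesis using Q0[OF True L1 jm1] Q0[OF True L2 jm2] by simp
  next
    case False
    have "H \<noteq> K"
    proof
      assume "H = K"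
      then have "H \<inter> L1 = L1" using L1 by auto
      then show False using JD[OF JM_J[OF jm1]] by simp
    qed
    then obtain Y where Y1: "(H, Y) \<in> T" and Y2: "(Y, K) \<in> T" and YH: "Y \<noteq> H" and YK: "Y \<noteq> K"
      using False HK unfolding Jset_def by auto
    have HY: "H \<subseteq> Y" and YKs: "Y \<subseteq> K" and sY: "subgroup Y G" using TD[OF Y1] TD[OF Y2] by auto
    have fK: "finite K" and fY: "finite Y" using TD[OF Y2] sub_fin by auto
    have cHY: "card H < card Y" using HY YH fY psubset_card_mono by blast
    have cYK: "card Y < card K" using YKs YK fK psubset_card_mono by blast
    have inY: "L \<subseteq> Y" if L: "subgroup L G" "L \<subseteq> K" and jm: "(H \<inter> L, L) \<in> JM" for L
    proof -
      have jJ: "(H \<inter> L, L) \<in> J" using JM_J[OF jm] .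
      have ind: "\<And>Z. (H \<inter> L, Z) \<in> T \<Longrightarrow> (Z, L) \<in> T \<Longrightarrow> Z = H \<inter> L \<or> Z = L"
        using JD[OF jJ] by blast
      have sYL: "subgroup (Y \<inter> L) G" using subgroups_Inter_pair[OF sY L(1)] .
      have "(H \<inter> (Y \<inter> L), Y \<inter> L) \<in> T" using ts_res[OF ts Y1 sYL] by auto
      moreover have "H \<inter> (Y \<inter> L) = H \<inter> L" using HY by auto
      ultimately have r1: "(H \<inter> L, Y \<inter> L) \<in> T" by simp
      have r2: "(Y \<inter> L, L) \<in> T" using ts_res[OF ts Y2 L] .
      have "Y \<inter> L = H \<inter> L \<or> Y \<inter> L = L" using ind[OF r1 r2] .
      then show ?thesis
      proof
        assume e: "Y \<inter> L = L"
        then show ?thesis by auto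
      next
        assume e: "Y \<inter> L = H \<inter> L"
        then have "(Y \<inter> L, L) \<in> JM" using jm by simp
        then have "Y \<subseteq> L" using Q1[OF Y2 L] by auto
        then have "Y \<subseteq> H" using e by auto
        then show ?thesis using HY YH by auto
      qed
    qed
    have "L1 \<subseteq> Y" "L2 \<subseteq> Y" using inY L1 jm1 L2 jm2 by auto
    then show ?thesis using less.hyps[of Y H] cHY cYK Y1 L1 jm1 L2 jm2 by auto
  qed
qed

lemma Q2c: assumes s: "s \<in> T" and j1: "j1 \<in> JM" and j2: "j2 \<in> JM"
  and l1: "leR G j1 s" and l2: "leR G j2 s"
  shows "leR G j2 j1"
proof -
  obtain H K where sHK: "s = (H, K)" by force
  have Hc: "H \<subseteq> carrier G" and Kc: "K \<subseteq> carrier G" using TD s sHK by auto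
  obtain g1 L1 where g1: "g1 \<in> carrier G" and L1: "subgroup L1 G" "L1 \<subseteq> conj_sub G g1 K"
    and j1e: "j1 = (conj_sub G g1 H \<inter> L1, L1)" using l1 unfolding leR_def sHK by auto
  obtain g2 L2 where g2: "g2 \<in> carrier G" and L2: "subgroup L2 G" "L2 \<subseteq> conj_sub G g2 K"
    and j2e: "j2 = (conj_sub G g2 H \<inter> L2, L2)" using l2 unfolding leR_def sHK by auto
  have s1: "(conj_sub G g1 H, conj_sub G g1 K) \<in> T" using ts_conj[OF ts _ g1] s sHK by simp
  have s2: "(conj_sub G g2 H, conj_sub G g2 K) \<in> T" using ts_conj[OF ts _ g2] s sHK by simp
  have i1: "conj_sub G g1 H \<subseteq> L1" using Q1[OF s1 L1] j1 j1e by simp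
  have i2: "conj_sub G g2 H \<subseteq> L2" using Q1[OF s2 L2] j2 j2e by simp
  define h where "h = g2 \<otimes> inv g1"
  have h: "h \<in> carrier G" unfolding h_def using g1 g2 by simp
  have hg: "h \<otimes> g1 = g2" unfolding h_def using g1 g2 by (simp add: m_assoc)
  have ch: "conj_sub G h (conj_sub G g1 X) = conj_sub G g2 X" if "X \<subseteq> carrier G" for X
    using cs_comp[OF that g1 h] hg by simp
  have j1e': "j1 = (conj_sub G g1 H, L1)" using j1e i1 by auto
  have cjm: "cj G h j1 \<in> JM" using JM_conj[OF j1 h] .
  have cje: "cj G h j1 = (conj_sub G g2 H, conj_sub G h L1)" unfolding cj_def j1e' using ch[OF Hc] by simp
  have sub: "subgroup (conj_sub G h L1) G" using TD[of "conj_sub G g2 H" "conj_sub G h L1"] JM_T[OF cjm] cje by simp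
  have sK: "conj_sub G h L1 \<subseteq> conj_sub G g2 K" using cs_mono[OF L1(2), of h] ch[OF Kc] by simp
  have inc: "conj_sub G g2 H \<subseteq> conj_sub G h L1" using cs_mono[OF i1, of h] ch[OF Hc] by simp
  have "(conj_sub G g2 H \<inter> conj_sub G h L1, conj_sub G h L1) \<in> JM" using cjm cje inc
    by (simp add: Int_absorb2)
  then have "L2 = conj_sub G h L1" using Q2[OF s2 L2(1) L2(2) _ sub sK] j2 j2e by simp
  then have "j2 = cj G h j1" using j2e i2 cje by auto
  then show ?thesis using leR_conj1[OF ts JM_T[OF j1] h] by simp
qed


lemma gen_le: "transfer_system G D \<Longrightarrow> S \<subseteq> D \<Longrightarrow> generated_ts G S \<subseteq> D"
  unfolding generated_ts_def by auto

lemma gen_sup: "S \<subseteq> generated_ts G S"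
  unfolding generated_ts_def by auto

lemma gen_ts: assumes D: "transfer_system G D" and SD: "S \<subseteq> D"
  shows "transfer_system G (generated_ts G S)"
proof -
  let ?F = "{T. transfer_system G T \<and> S \<subseteq> T}"
  have X: "generated_ts G S = \<Inter>?F" unfolding generated_ts_def ..
  have DF: "D \<in> ?F" using D SD by auto
  have a: "\<Inter>?F \<subseteq> arrows G" using DF ts_arrows[OF D] by blast
  have b: "\<forall>H. subgroup H G \<longrightarrow> (H, H) \<in> \<Inter>?F"
  proof (intro allI impI InterI)
    fix H X assume "subgroup H G" "X \<in> ?F" then show "(H, H) \<in> X" using ts_id[of X H] by blast
  qed
  have c: "\<forall>H K L. (H, K) \<in> \<Inter>?F \<longrightarrow> (K, L) \<in> \<Inter>?F \<longrightarrow> (H, L) \<in> \<Inter>?F"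
  proof (intro allI impI InterI)
    fix H K L X assume "(H, K) \<in> \<Inter>?F" "(K, L) \<in> \<Inter>?F" "X \<in> ?F"
    then show "(H, L) \<in> X" using ts_comp[of X H K L] by blast
  qed
  have d: "\<forall>H K g. (H, K) \<in> \<Inter>?F \<longrightarrow> g \<in> carrier G \<longrightarrow> (conj_sub G g H, conj_sub G g K) \<in> \<Inter>?F"
  proof (intro allI impI InterI)
    fix H K g X assume "(H, K) \<in> \<Inter>?F" "g \<in> carrier G" "X \<in> ?F"
    then show "(conj_sub G g H, conj_sub G g K) \<in> X" using ts_conj[of X H K g] by blast
  qed
  have e: "\<forall>H K L. (H, K) \<in> \<Inter>?F \<longrightarrow> subgroup L G \<longrightarrow> L \<subseteq> K \<longrightarrow> (H \<inter> L, L) \<in> \<Inter>?F"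
  proof (intro allI impI InterI)
    fix H K L X assume "(H, K) \<in> \<Inter>?F" "subgroup L G" "L \<subseteq> K" "X \<in> ?F"
    then show "(H \<inter> L, L) \<in> X" using ts_res[of X H K L] by blast
  qed
  show ?thesis unfolding X by (rule transfer_system_def[THEN iffD2], intro conjI a b c d e)
qed

lemma Cov: assumes ST: "S \<subseteq> T" and gen: "generated_ts G S = T" and j: "j \<in> J"
  shows "\<exists>s\<in>S. leR G j s"
proof -
  define T' where "T' = {a \<in> T. \<forall>j\<in>J. leR G j a \<longrightarrow> (\<exists>s\<in>S. leR G j s)}"
  have T'T: "T' \<subseteq> T" unfolding T'_def by auto
  have a: "T' \<subseteq> arrows G" using T'T T_arr by auto
  have b: "(H, H) \<in> T'" if H: "subgroup H G" for H
  proof -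
    have "False" if jJ: "j \<in> J" and le: "leR G j (H, H)" for j
    proof -
      obtain g L where "L \<subseteq> conj_sub G g H" and je: "j = (conj_sub G g H \<inter> L, L)"
        using le unfolding leR_def by auto
      then have "j = (L, L)" by auto
      then show False using jJ unfolding Jset_def by auto
    qed
    then show ?thesis unfolding T'_def using ts_id[OF ts H] by auto
  qed
  have c: "(A, C) \<in> T'" if AB: "(A, B) \<in> T'" and BC: "(B, C) \<in> T'" for A B C
  proof -
    have ABT: "(A, B) \<in> T" and BCT: "(B, C) \<in> T" using AB BC T'T by auto
    have ACT: "(A, C) \<in> T" using ts_comp[OF ts ABT BCT] .
    have "\<exists>s\<in>S. leR G j s" if jJ: "j \<in> J" and le: "leR G j (A, C)" for j
    proof -
      obtain g L where g: "g \<in> carrier G" and L: "subgroup L G" "L \<subseteq> conj_sub G g C"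
        and je: "j = (conj_sub G g A \<inter> L, L)" using le unfolding leR_def by auto
      have c1: "(conj_sub G g A, conj_sub G g B) \<in> T" using ts_conj[OF ts ABT g] .
      have c2: "(conj_sub G g B, conj_sub G g C) \<in> T" using ts_conj[OF ts BCT g] .
      have sBL: "subgroup (conj_sub G g B \<inter> L) G"
        using subgroups_Inter_pair[OF _ L(1)] TD[OF c1] by auto
      have sub: "conj_sub G g A \<subseteq> conj_sub G g B" using TD[OF c1] by auto
      have "(conj_sub G g A \<inter> (conj_sub G g B \<inter> L), conj_sub G g B \<inter> L) \<in> T"
        using ts_res[OF ts c1 sBL] by auto
      then have r1: "(conj_sub G g A \<inter> L, conj_sub G g B \<inter> L) \<in> T" using sub
        by (metis Int_assoc Int_absorb2)
      have r2: "(conj_sub G g B \<inter> L, L) \<in> T" using ts_res[OF ts c2 L] .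
      have "conj_sub G g B \<inter> L = conj_sub G g A \<inter> L \<or> conj_sub G g B \<inter> L = L"
        using JD[of "conj_sub G g A \<inter> L" L] jJ je r1 r2 by blast
      then show ?thesis
      proof
        assume e: "conj_sub G g B \<inter> L = conj_sub G g A \<inter> L"
        have "leR G j (B, C)" unfolding leR_def using g L je e by auto
        then show ?thesis using BC jJ unfolding T'_def by auto
      next
        assume e: "conj_sub G g B \<inter> L = L"
        have "leR G j (A, B)" unfolding leR_def using g L je e by auto
        then show ?thesis using AB jJ unfolding T'_def by auto
      qed
    qed
    then show ?thesis unfolding T'_def using ACT by auto
  qed
  have d: "(conj_sub G g A, conj_sub G g B) \<in> T'" if AB: "(A, B) \<in> T'" and g: "g \<in> carrier G" for A B g
  proof -
    have ABT: "(A, B) \<in> T" using AB T'T by auto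
    have "\<exists>s\<in>S. leR G j s" if jJ: "j \<in> J" and le: "leR G j (conj_sub G g A, conj_sub G g B)" for j
    proof -
      have "leR G (cj G g (A, B)) (A, B)" using leR_conj1[OF ts ABT g] .
      then have "leR G j (A, B)" using leR_trans[of j "cj G g (A, B)" "(A, B)"] le ABT T_arr
        unfolding cj_def by auto
      then show ?thesis using AB jJ unfolding T'_def by auto
    qed
    then show ?thesis unfolding T'_def using ts_conj[OF ts ABT g] by auto
  qed
  have e: "(A \<inter> L, L) \<in> T'" if AB: "(A, B) \<in> T'" and L: "subgroup L G" "L \<subseteq> B" for A B L
  proof -
    have ABT: "(A, B) \<in> T" using AB T'T by auto
    have "\<exists>s\<in>S. leR G j s" if jJ: "j \<in> J" and le: "leR G j (A \<inter> L, L)" for j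
    proof -
      have "leR G (A \<inter> L, L) (A, B)" using leR_restr[OF _ L] ABT T_arr by auto
      then have "leR G j (A, B)" using leR_trans[of j "(A \<inter> L, L)" "(A, B)"] le ABT T_arr by auto
      then show ?thesis using AB jJ unfolding T'_def by auto
    qed
    then show ?thesis unfolding T'_def using ts_res[OF ts ABT L] by auto
  qed
  have tsT': "transfer_system G T'" unfolding transfer_system_def using a b c d e by blast
  have ST': "S \<subseteq> T'" unfolding T'_def using ST by auto
  have "T \<subseteq> T'" using gen_le[OF tsT' ST'] gen by simp
  then have "j \<in> T'" using J_T[OF j] by auto
  then show ?thesis using j leR_refl[of j] J_T[OF j] T_arr unfolding T'_def by auto
qed

lemma Dec: assumes D: "transfer_system G D" and JD: "J \<subseteq> D" and a: "(H, K) \<in> T"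
  shows "(H, K) \<in> D"
  using a
proof (induction "card K - card H" arbitrary: H K rule: less_induct)
  case less
  have HK: "(H, K) \<in> T" using less.prems .
  show ?case
  proof (cases "(H, K) \<in> J \<or> H = K")
    case True
    then show ?thesis using JD ts_id[OF D] TD[OF HK] by auto
  next
    case False
    then obtain Y where Y1: "(H, Y) \<in> T" and Y2: "(Y, K) \<in> T" and YH: "Y \<noteq> H" and YK: "Y \<noteq> K"
      using HK unfolding Jset_def by auto
    have HY: "H \<subseteq> Y" and YKs: "Y \<subseteq> K" using TD[OF Y1] TD[OF Y2] by auto
    have fK: "finite K" and fY: "finite Y" using TD[OF Y2] sub_fin by auto
    have cHY: "card H < card Y" using HY YH fY psubset_card_mono by blast
    have cYK: "card Y < card K" using YKs YK fK psubset_card_mono by blast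
    have "(H, Y) \<in> D" using less.hyps[of Y H] cHY cYK Y1 by auto
    moreover have "(Y, K) \<in> D" using less.hyps[of K Y] cHY cYK Y2 by auto
    ultimately show ?thesis using ts_comp[OF D] by blast
  qed
qed


lemma W_exists: assumes mgs: "minimal_generating_set G T S" and s: "s \<in> S"
  shows "\<exists>m. m \<in> JM \<and> leR G m s \<and> (\<forall>s'\<in>S. \<forall>j'\<in>T. leR G m j' \<longrightarrow> leR G j' s' \<longrightarrow> s' = s)"
proof -
  have ST: "S \<subseteq> T" and gen: "generated_ts G S = T" and strict: "generated_ts G (S - {s}) \<subset> T"
    using mgs s unfolding minimal_generating_set_def by auto
  have "\<exists>p\<in>J. leR G p s \<and> (\<forall>s'\<in>S. leR G p s' \<longrightarrow> s' = s)"
  proof (rule ccontr)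
    assume "\<not> ?thesis"
    note nt = this
    have Hy: "\<exists>s'\<in>S. leR G p s' \<and> s' \<noteq> s" if "p \<in> J" "leR G p s" for p
      using nt that by blast
    let ?D = "generated_ts G (S - {s})"
    have SsT: "S - {s} \<subseteq> T" using ST by auto
    have tsD: "transfer_system G ?D" using gen_ts[OF ts SsT] .
    have JD: "J \<subseteq> ?D"
    proof
      fix j assume j: "j \<in> J"
      obtain s0 where s0: "s0 \<in> S" "leR G j s0" using Cov[OF ST gen j] by blast
      have "\<exists>s'\<in>S - {s}. leR G j s'"
      proof (cases "s0 = s")
        case True
        then have "leR G j s" using s0 by simp
        then obtain s' where "s' \<in> S" "leR G j s'" "s' \<noteq> s" using Hy[OF j] by blast
        then show ?thesis by blast
      next
        case False
        then have "s0 \<in> S - {s}" using s0 by simp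
        then show ?thesis using s0(2) by blast
      qed
      then obtain s' where s': "s' \<in> S - {s}" "leR G j s'" by blast
      have "s' \<in> ?D" using s'(1) gen_sup[of "S - {s}"] by auto
      then show "j \<in> ?D" using leR_closed[OF tsD _ s'(2)] by simp
    qed
    have "T \<subseteq> ?D"
    proof
      fix a assume a: "a \<in> T"
      obtain H K where "a = (H, K)" by force
      then show "a \<in> ?D" using Dec[OF tsD JD] a by simp
    qed
    then show False using strict by auto
  qed
  then obtain p where p: "p \<in> J" "leR G p s" and priv: "\<And>s'. s' \<in> S \<Longrightarrow> leR G p s' \<Longrightarrow> s' = s" by blast
  obtain m where m: "m \<in> JM" "leR G p m" using max_exists[OF p(1)] by blast
  obtain s'' where s'': "s'' \<in> S" "leR G m s''" using Cov[OF ST gen JM_J[OF m(1)]] by blast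
  have "leR G p s''" using leR_trans[OF m(2) s''(2)] s'' ST T_arr by auto
  then have "s'' = s" using priv s'' by blast
  then have ms: "leR G m s" using s'' by simp
  have "s' = s" if s': "s' \<in> S" and j': "j' \<in> T" and l1: "leR G m j'" and l2: "leR G j' s'" for s' j'
  proof -
    have "leR G p j'" using leR_trans[OF m(2) l1] j' T_arr by auto
    moreover have "s' \<in> arrows G" using s' ST T_arr by auto
    ultimately have "leR G p s'" using leR_trans[OF _ l2] by blast
    then show ?thesis using priv s' by blast
  qed
  then show ?thesis using m ms by blast
qed

lemma card_le: assumes m1: "minimal_generating_set G T S1" and m2: "minimal_generating_set G T S2"
  shows "card S1 \<le> card S2"
proof -
  have ST2: "S2 \<subseteq> T" and gen2: "generated_ts G S2 = T" using m2 unfolding minimal_generating_set_def by auto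
  have ST1: "S1 \<subseteq> T" using m1 unfolding minimal_generating_set_def by auto
  let ?W = "\<lambda>s m. m \<in> JM \<and> leR G m s \<and> (\<forall>s'\<in>S1. \<forall>j'\<in>T. leR G m j' \<longrightarrow> leR G j' s' \<longrightarrow> s' = s)"
  define f where "f s = (SOME m. ?W s m)" for s
  have fW: "?W s (f s)" if "s \<in> S1" for s
    unfolding f_def using someI_ex[OF W_exists[OF m1 that]] .
  define \<phi> where "\<phi> s = (SOME s2. s2 \<in> S2 \<and> leR G (f s) s2)" for s
  have \<phi>P: "\<phi> s \<in> S2 \<and> leR G (f s) (\<phi> s)" if "s \<in> S1" for s
  proof -
    have "\<exists>s2. s2 \<in> S2 \<and> leR G (f s) s2" using Cov[OF ST2 gen2 JM_J] fW[OF that] by blast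
    then show ?thesis unfolding \<phi>_def by (rule someI_ex)
  qed
  have inj: "inj_on \<phi> S1"
  proof (rule inj_onI)
    fix s s' assume s: "s \<in> S1" and s': "s' \<in> S1" and e: "\<phi> s = \<phi> s'"
    have T\<phi>: "\<phi> s \<in> T" using \<phi>P[OF s] ST2 by auto
    have "leR G (f s') (f s)" using Q2c[OF T\<phi>, of "f s" "f s'"] fW[OF s] fW[OF s'] \<phi>P[OF s] \<phi>P[OF s'] e by auto
    moreover have "f s \<in> T" using fW[OF s] JM_T by blast
    moreover have "leR G (f s) s" using fW[OF s] by blast
    ultimately show "s = s'" using fW[OF s'] s by blast
  qed
  have "finite S2" using ST2 finT finite_subset by blast
  moreover have "\<phi> ` S1 \<subseteq> S2" using \<phi>P by blast
  ultimately show ?thesis using card_inj_on_le[OF inj] by blast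
qed

lemma existence: "\<exists>S. minimal_generating_set G T S"
proof -
  let ?P = "\<lambda>S. S \<subseteq> T \<and> (\<forall>(H, K)\<in>S. H \<noteq> K) \<and> generated_ts G S = T"
  define S0 where "S0 = {a \<in> T. fst a \<noteq> snd a}"
  have "generated_ts G S0 \<subseteq> T" using gen_le[OF ts] unfolding S0_def by auto
  moreover have "T \<subseteq> generated_ts G S0"
  proof
    fix a assume a: "a \<in> T"
    obtain H K where aHK: "a = (H, K)" by force
    have tsX: "transfer_system G (generated_ts G S0)" using gen_ts[OF ts] unfolding S0_def by auto
    show "a \<in> generated_ts G S0"
    proof (cases "H = K")
      case True
      then show ?thesis using ts_id[OF tsX] TD a aHK by auto
    next
      case False
      then have "a \<in> S0" unfolding S0_def using a aHK by auto
      then show ?thesis using gen_sup by blast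
    qed
  qed
  ultimately have P0: "?P S0" unfolding S0_def by auto
  obtain S where S: "?P S" and Smin: "\<And>S'. ?P S' \<Longrightarrow> card S \<le> card S'"
    using ex_has_least_nat[of ?P S0 card, OF P0] by blast
  have fS: "finite S" using S finT finite_subset by blast
  have "generated_ts G (S - {s}) \<subset> T" if s: "s \<in> S" for s
  proof -
    have le: "generated_ts G (S - {s}) \<subseteq> T" using gen_le[OF ts] S by blast
    have "generated_ts G (S - {s}) \<noteq> T"
    proof
      assume "generated_ts G (S - {s}) = T"
      then have "?P (S - {s})" using S by blast
      then have "card S \<le> card (S - {s})" using Smin by blast
      moreover have "card (S - {s}) < card S" using card_Diff1_less[OF fS s] .
      ultimately show False by simp
    qed
    then show ?thesis using le by blast
  qed
  then have "minimal_generating_set G T S" using S unfolding minimal_generating_set_def by blast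
  then show ?thesis by blast
qed

end

theorem corollary2p14:
  fixes G :: "('a, 'b) monoid_scheme" and T :: "('a set \<times> 'a set) set"
  assumes "group G" and "finite (carrier G)" and "transfer_system G T"
  shows "(\<exists>S. minimal_generating_set G T S)
       \<and> (\<forall>S1 S2. minimal_generating_set G T S1 \<longrightarrow> minimal_generating_set G T S2
                 \<longrightarrow> card S1 = card S2)"
proof -
  interpret tsctx G T using assms by (simp add: tsctx_def tsctx_axioms_def)
  show ?thesis using existence card_le le_antisym by blast
qed

end
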